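(* Let $J\ge1$ and let $\gamma\subset\mathbb R^2$ be a locally rectifiable curve joining $x$ to $y$, where $x,y\in\mathbb R^2$. Then $car(\gamma,J)$ is a $J$-carrot John domain (with center $y$). More precisely, for every $z\in car(\gamma,J)$ there exist a rectifiable curve $\gamma_z$ joining $z$ to $y$ and a point $\eta\in\gamma$ such that $\gamma[\eta,y]=\gamma_z[\eta,y]$ and, for each $a\in\gamma[\eta,y]$, $$\ell(\gamma_z[z,a])\le\ell(\gamma[x,a]),\qquad car(\gamma_z,J)\subset car(\gamma,J).$$
   Context: For a curve $\gamma$ and points $p,q\in\gamma$, $\gamma[p,q]$ denotes the subcurve joining $p$ to $q$ and $\ell(\cdot)$ the Euclidean length. For a curve $\gamma$ starting at a point $v$ (its vertex), the $J$-carrot is $car(\gamma,J):=\bigcup\{B(w,\ell(\gamma[v,w])/J): w\in\gamma\setminus\{v\}\}$; thus $car(\gamma,J)$ has vertex $x$ and $car(\gamma_z,J)$ has vertex $z$. A domain $D$ is a $J$-carrot John domain with center $y$ if every point $p\in D$ can be joined to $y$ by a curve $\beta\subset D$ with $car(\beta,J)\subset D$. *)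

theory Defs
  imports "HOL-Analysis.Analysis"
begin

definition polygonal_sums :: "(real \<Rightarrow> 'a::metric_space) \<Rightarrow> real \<Rightarrow> real \<Rightarrow> real set" where
  "polygonal_sums g a b =
     {(\<Sum>i<n. dist (g (p (Suc i))) (g (p i))) | n p.
        p 0 = a \<and> p n = b \<and> (\<forall>i<n. p i \<le> p (Suc i))}"

definition curve_length :: "(real \<Rightarrow> 'a::metric_space) \<Rightarrow> real \<Rightarrow> real \<Rightarrow> real" where
  "curve_length g a b = Sup (polygonal_sums g a b)"

definition rectifiable_on :: "(real \<Rightarrow> 'a::metric_space) \<Rightarrow> real \<Rightarrow> real \<Rightarrow> bool" where
  "rectifiable_on g a b \<longleftrightarrow> bdd_above (polygonal_sums g a b)"

definition rectifiable_path :: "(real \<Rightarrow> 'a::real_normed_vector) \<Rightarrow> bool" where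
  "rectifiable_path g \<longleftrightarrow> path g \<and> rectifiable_on g 0 1"

definition locally_rectifiable_path :: "(real \<Rightarrow> 'a::real_normed_vector) \<Rightarrow> bool" where
  "locally_rectifiable_path g \<longleftrightarrow>
     path g \<and> (\<forall>a b. 0 \<le> a \<and> a \<le> b \<and> b \<le> 1 \<longrightarrow> rectifiable_on g a b)"

definition carrot :: "(real \<Rightarrow> 'a::real_normed_vector) \<Rightarrow> real \<Rightarrow> 'a set" where
  "carrot g J = \<Union> {ball (g t) (curve_length g 0 t / J) | t. t \<in> {0..1} \<and> g t \<noteq> g 0}"

definition john_carrot_domain :: "'a::real_normed_vector set \<Rightarrow> real \<Rightarrow> 'a \<Rightarrow> bool" where
  "john_carrot_domain D J y \<longleftrightarrow> open D \<and> connected D \<and>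
     (\<forall>p\<in>D. \<exists>\<beta>. path \<beta> \<and> pathstart \<beta> = p \<and> pathfinish \<beta> = y \<and>
        path_image \<beta> \<subseteq> D \<and> carrot \<beta> J \<subseteq> D)"

end

theory Submission
  imports Defs
begin


lemma part_mono:
  assumes "\<forall>i<n. p i \<le> p (Suc i)" "i \<le> j" "j \<le> n"
  shows "p i \<le> (p j :: real)"
  using assms(2,3)
proof (induction j)
  case 0 then show ?case by simp
next
  case (Suc j)
  show ?case
  proof (cases "i = Suc j")
    case True then show ?thesis by simp
  next
    case False
    then have "i \<le> j" using Suc.prems by simp
    then have "p i \<le> p j" using Suc by simp
    also have "p j \<le> p (Suc j)" using assms(1) Suc.prems by simp
    finally show ?thesis .
  qed
qed

lemma part_range:
  assumes "p 0 = a" "p n = b" "\<forall>i<n. p i \<le> p (Suc i)" "i \<le> n"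
  shows "a \<le> p i \<and> p i \<le> (b::real)"
  using part_mono[OF assms(3), of 0 i] part_mono[OF assms(3), of i n] assms by auto

lemma ps_one:
  assumes "a \<le> b" shows "dist (g b) (g a) \<in> polygonal_sums g a b"
  unfolding polygonal_sums_def
  by (rule CollectI, rule exI[of _ 1], rule exI[of _ "\<lambda>i. if i = 0 then a else b"]) (use assms in auto)

lemma ps_nonneg: "S \<in> polygonal_sums g a b \<Longrightarrow> 0 \<le> S"
  unfolding polygonal_sums_def by (auto intro!: sum_nonneg)

lemma sum_lessThan_add_split:
  fixes f :: "nat \<Rightarrow> 'a::comm_monoid_add"
  shows "(\<Sum>i<n+m. f i) = (\<Sum>i<n. f i) + (\<Sum>i<m. f (n+i))"
  by (induction m) (auto simp: add.assoc)

lemma ps_concat: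
  assumes "S1 \<in> polygonal_sums g a b" "S2 \<in> polygonal_sums g b c"
  shows "S1 + S2 \<in> polygonal_sums g a c"
proof -
  obtain n p where p: "S1 = (\<Sum>i<n. dist (g (p (Suc i))) (g (p i)))" "p 0 = a" "p n = b" "\<forall>i<n. p i \<le> p (Suc i)"
    using assms(1) unfolding polygonal_sums_def by blast
  obtain m q where q: "S2 = (\<Sum>i<m. dist (g (q (Suc i))) (g (q i)))" "q 0 = b" "q m = c" "\<forall>i<m. q i \<le> q (Suc i)"
    using assms(2) unfolding polygonal_sums_def by blast
  define r where "r i = (if i \<le> n then p i else q (i - n))" for i
  have "(\<Sum>i<n+m. dist (g (r (Suc i))) (g (r i))) = (\<Sum>i<n. dist (g (r (Suc i))) (g (r i))) + (\<Sum>i<m. dist (g (r (Suc (n+i)))) (g (r (n+i))))"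
    by (rule sum_lessThan_add_split)
  also have "(\<Sum>i<n. dist (g (r (Suc i))) (g (r i))) = S1"
    using p by (auto simp: r_def intro!: sum.cong)
  also have "(\<Sum>i<m. dist (g (r (Suc (n+i)))) (g (r (n+i)))) = S2"
    using p q by (auto simp: r_def Suc_diff_le intro!: sum.cong)
  finally have "(\<Sum>i<n+m. dist (g (r (Suc i))) (g (r i))) = S1 + S2" .
  moreover have "r 0 = a" "r (n+m) = c" using p q by (auto simp: r_def)
  moreover have "\<forall>i<n+m. r i \<le> r (Suc i)"
  proof (intro allI impI)
    fix i assume "i < n + m"
    show "r i \<le> r (Suc i)"
      using p q \<open>i < n+m\<close> by (cases "i < n") (auto simp: r_def Suc_diff_le not_less, metis zero_less_iff_neq_zero)
  qed
  ultimately have "\<exists>k r. S1 + S2 = (\<Sum>i<k. dist (g (r (Suc i))) (g (r i))) \<and> r 0 = a \<and> r k = c \<and> (\<forall>i<k. r i \<le> r (Suc i))"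
    by metis
  then show ?thesis unfolding polygonal_sums_def by blast
qed

lemma ps_split:
  assumes "S \<in> polygonal_sums g a c" "a \<le> b" "b \<le> c"
  shows "\<exists>S1 S2. S1 \<in> polygonal_sums g a b \<and> S2 \<in> polygonal_sums g b c \<and> S \<le> S1 + S2"
proof -
  obtain n p where p: "S = (\<Sum>i<n. dist (g (p (Suc i))) (g (p i)))" "p 0 = a" "p n = c" "\<forall>i<n. p i \<le> p (Suc i)"
    using assms(1) unfolding polygonal_sums_def by blast
  define p1 where "p1 i = min (p i) b" for i
  define p2 where "p2 i = max (p i) b" for i
  define S1 where "S1 = (\<Sum>i<n. dist (g (p1 (Suc i))) (g (p1 i)))"
  define S2 where "S2 = (\<Sum>i<n. dist (g (p2 (Suc i))) (g (p2 i)))"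
  have "S1 \<in> polygonal_sums g a b"
    unfolding polygonal_sums_def S1_def
    using p assms by (intro CollectI exI[of _ n] exI[of _ p1]) (auto simp: p1_def)
  moreover have "S2 \<in> polygonal_sums g b c"
    unfolding polygonal_sums_def S2_def
    using p assms by (intro CollectI exI[of _ n] exI[of _ p2]) (auto simp: p2_def)
  moreover have "S \<le> S1 + S2"
  proof -
    have "dist (g (p (Suc i))) (g (p i)) \<le> dist (g (p1 (Suc i))) (g (p1 i)) + dist (g (p2 (Suc i))) (g (p2 i))"
      if "i < n" for i
    proof -
      have le: "p i \<le> p (Suc i)" using p that by auto
      consider "p (Suc i) \<le> b" | "b \<le> p i" | "p i < b" "b < p (Suc i)" by linarith
      then show ?thesis
      proof cases
        case 1 then show ?thesis using le by (simp add: p1_def p2_def)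
      next
        case 2 then show ?thesis using le by (simp add: p1_def p2_def)
      next
        case 3 then show ?thesis using le
          by (simp add: p1_def p2_def) (metis add.commute dist_commute dist_triangle)
      qed
    qed
    then have "S \<le> (\<Sum>i<n. dist (g (p1 (Suc i))) (g (p1 i)) + dist (g (p2 (Suc i))) (g (p2 i)))"
      unfolding p(1) by (intro sum_mono) auto
    then show ?thesis by (simp add: S1_def S2_def sum.distrib)
  qed
  ultimately show ?thesis by blast
qed

lemma ps_lipschitz:
  assumes "\<And>u v. a \<le> u \<Longrightarrow> u \<le> v \<Longrightarrow> v \<le> b \<Longrightarrow> dist (g v) (g u) \<le> K * (v - u)"
    and "S \<in> polygonal_sums g a b"
  shows "S \<le> K * (b - a)"
proof -
  obtain n p where p: "S = (\<Sum>i<n. dist (g (p (Suc i))) (g (p i)))" "p 0 = a" "p n = b" "\<forall>i<n. p i \<le> p (Suc i)"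
    using assms(2) unfolding polygonal_sums_def by blast
  have "S \<le> (\<Sum>i<n. K * (p (Suc i) - p i))"
    unfolding p(1)
  proof (intro sum_mono)
    fix i assume "i \<in> {..<n}"
    then show "dist (g (p (Suc i))) (g (p i)) \<le> K * (p (Suc i) - p i)"
      using assms(1) part_range[OF p(2-4), of i] part_range[OF p(2-4), of "Suc i"] p(4) by auto
  qed
  also have "\<dots> = K * (p n - p 0)"
    by (simp add: sum_distrib_left[symmetric] sum_lessThan_telescope)
  finally show ?thesis using p by simp
qed

lemma ps_reparam:
  assumes "k \<ge> 0" "\<And>u. u \<in> {a..b} \<Longrightarrow> h u = g (c + k * u)"
    and "S \<in> polygonal_sums h a b"
  shows "S \<in> polygonal_sums g (c + k * a) (c + k * b)"
proof -
  obtain n p where p: "S = (\<Sum>i<n. dist (h (p (Suc i))) (h (p i)))" "p 0 = a" "p n = b" "\<forall>i<n. p i \<le> p (Suc i)"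
    using assms(3) unfolding polygonal_sums_def by blast
  have "S = (\<Sum>i<n. dist (g (c + k * p (Suc i))) (g (c + k * p i)))"
    unfolding p(1)
  proof (intro sum.cong refl)
    fix i assume "i \<in> {..<n}"
    then show "dist (h (p (Suc i))) (h (p i)) = dist (g (c + k * p (Suc i))) (g (c + k * p i))"
      using assms(2) part_range[OF p(2-4), of i] part_range[OF p(2-4), of "Suc i"] by auto
  qed
  moreover have "\<forall>i<n. c + k * p i \<le> c + k * p (Suc i)"
    using p(4) assms(1) by (auto intro: mult_left_mono)
  ultimately show ?thesis unfolding polygonal_sums_def using p
    by (intro CollectI exI[of _ n] exI[of _ "\<lambda>i. c + k * p i"]) auto
qed

lemma L_ge: "rectifiable_on g a b \<Longrightarrow> S \<in> polygonal_sums g a b \<Longrightarrow> S \<le> curve_length g a b"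
  unfolding rectifiable_on_def curve_length_def by (rule cSup_upper)

lemma L_le: "a \<le> b \<Longrightarrow> (\<And>S. S \<in> polygonal_sums g a b \<Longrightarrow> S \<le> M) \<Longrightarrow> curve_length g a b \<le> M"
  unfolding curve_length_def using ps_one[of a b g] by (intro cSup_least) auto

lemma rect_le: "a \<le> b \<Longrightarrow> (\<And>S. S \<in> polygonal_sums g a b \<Longrightarrow> S \<le> M) \<Longrightarrow> rectifiable_on g a b"
  unfolding rectifiable_on_def bdd_above_def by blast

lemma L_nonneg: "a \<le> b \<Longrightarrow> rectifiable_on g a b \<Longrightarrow> 0 \<le> curve_length g a b"
  using ps_nonneg[OF ps_one[of a b g]] L_ge[OF _ ps_one[of a b g]] by (meson order_trans)

lemma rect_sub:
  assumes "rectifiable_on g a c" "a \<le> b" "b \<le> c"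
  shows "rectifiable_on g a b" "rectifiable_on g b c"
proof -
  show "rectifiable_on g a b"
  proof (rule rect_le[OF assms(2)])
    fix S assume "S \<in> polygonal_sums g a b"
    from ps_concat[OF this ps_one[OF assms(3)]] have "S + dist (g c) (g b) \<le> curve_length g a c"
      using L_ge assms(1) by blast
    then show "S \<le> curve_length g a c" by (smt (verit) zero_le_dist)
  qed
  show "rectifiable_on g b c"
  proof (rule rect_le[OF assms(3)])
    fix S assume "S \<in> polygonal_sums g b c"
    from ps_concat[OF ps_one[OF assms(2)] this] have "dist (g b) (g a) + S \<le> curve_length g a c"
      using L_ge assms(1) by blast
    then show "S \<le> curve_length g a c" by (smt (verit) zero_le_dist)
  qed
qed

lemma L_super:
  assumes "rectifiable_on g a c" "a \<le> b" "b \<le> c"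
  shows "curve_length g a b + curve_length g b c \<le> curve_length g a c"
proof -
  have "curve_length g b c \<le> curve_length g a c - curve_length g a b"
  proof (rule L_le[OF assms(3)])
    fix S2 assume S2: "S2 \<in> polygonal_sums g b c"
    have "curve_length g a b \<le> curve_length g a c - S2"
    proof (rule L_le[OF assms(2)])
      fix S1 assume "S1 \<in> polygonal_sums g a b"
      from L_ge[OF assms(1) ps_concat[OF this S2]] show "S1 \<le> curve_length g a c - S2" by simp
    qed
    then show "S2 \<le> curve_length g a c - curve_length g a b" by simp
  qed
  then show ?thesis by simp
qed

lemma L_sub:
  assumes "rectifiable_on g a b" "rectifiable_on g b c" "a \<le> b" "b \<le> c"
  shows "rectifiable_on g a c" "curve_length g a c \<le> curve_length g a b + curve_length g b c"
proof -
  have *: "S \<le> curve_length g a b + curve_length g b c" if hS: "S \<in> polygonal_sums g a c" for S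
  proof -
    obtain S1 S2 where "S1 \<in> polygonal_sums g a b" "S2 \<in> polygonal_sums g b c" "S \<le> S1 + S2"
      using ps_split[OF hS assms(3,4)] by blast
    then show ?thesis using L_ge[OF assms(1)] L_ge[OF assms(2)] by force
  qed
  show "rectifiable_on g a c" using * assms by (intro rect_le) auto
  show "curve_length g a c \<le> curve_length g a b + curve_length g b c" using * assms by (intro L_le) auto
qed



lemma in_carrotI:
  "t \<in> {0..1} \<Longrightarrow> g t \<noteq> g 0 \<Longrightarrow> dist w (g t) < curve_length g 0 t / J \<Longrightarrow> w \<in> carrot g J"
  unfolding carrot_def by (auto simp: dist_commute)

lemma carrot_vertex:
  fixes g :: "real \<Rightarrow> 'a::real_normed_vector"
  assumes pg: "path g" and rect: "\<And>a b. 0 \<le> a \<Longrightarrow> a \<le> b \<Longrightarrow> b \<le> 1 \<Longrightarrow> rectifiable_on g a b"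
    and J: "J \<ge> 1" and \<sigma>: "\<sigma> \<in> {0..1}" and gs: "g \<sigma> = g 0"
    and wd: "dist w (g \<sigma>) < curve_length g 0 \<sigma> / J"
  shows "w \<in> carrot g J"
proof -
  define x where "x = g 0"
  define L\<sigma> where "L\<sigma> = curve_length g 0 \<sigma>"
  have Jpos: "J > 0" using J by simp
  have JL: "J * dist w x < L\<sigma>" using wd Jpos by (simp add: x_def L\<sigma>_def gs field_simps)
  define E where "E = L\<sigma> - J * dist w x"
  have Epos: "E > 0" using JL by (simp add: E_def)
  define \<delta> where "\<delta> = E / (8 * J)"
  have \<delta>pos: "\<delta> > 0" using Epos Jpos by (simp add: \<delta>_def)
  have J\<delta>: "J * \<delta> = E / 8" using Jpos by (simp add: \<delta>_def)
  have \<delta>E: "\<delta> \<le> E / 8" unfolding \<delta>_def by (rule divide_left_mono) (use J Epos in auto)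
  have "L\<sigma> - E / 2 < Sup (polygonal_sums g 0 \<sigma>)" using Epos by (simp add: L\<sigma>_def curve_length_def)
  moreover have "polygonal_sums g 0 \<sigma> \<noteq> {}" using ps_one[of 0 \<sigma> g] \<sigma> by auto
  ultimately obtain S where S: "S \<in> polygonal_sums g 0 \<sigma>" "L\<sigma> - E / 2 < S"
    using less_cSupE by blast
  obtain n p where p: "S = (\<Sum>i<n. dist (g (p (Suc i))) (g (p i)))" "p 0 = 0" "p n = \<sigma>" "\<forall>i<n. p i \<le> p (Suc i)"
    using S(1) unfolding polygonal_sums_def by blast
  have "J * dist w x \<ge> 0" using Jpos by simp
  then have Spos: "S > 0" using S(2) JL E_def by linarith
  define K where "K = {i. i \<le> n \<and> g (p i) \<noteq> x}"
  have "K \<noteq> {}"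
  proof
    assume "K = {}"
    then have "\<forall>i\<le>n. g (p i) = x" by (auto simp: K_def)
    then have "S = 0" unfolding p(1) by (intro sum.neutral) auto
    then show False using Spos by simp
  qed
  have finK: "finite K" by (simp add: K_def)
  define k where "k = Max K"
  have kK: "k \<in> K" using Max_in[OF finK \<open>K \<noteq> {}\<close>] by (simp add: k_def)
  have after: "g (p i) = x" if "k < i" "i \<le> n" for i
  proof (rule ccontr)
    assume "g (p i) \<noteq> x"
    then have "i \<in> K" using that by (simp add: K_def)
    then have "i \<le> k" using Max_ge[OF finK] k_def by simp
    then show False using that by simp
  qed
  have kn: "k < n" using kK gs p(3) by (auto simp: K_def x_def le_less)
  have gpk: "g (p k) \<noteq> x" using kK by (simp add: K_def)
  have gpk1: "g (p (Suc k)) = x" using after kn by simp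
  define Sk where "Sk = (\<Sum>i<k. dist (g (p (Suc i))) (g (p i)))"
  have "S = (\<Sum>i<Suc k + (n - Suc k). dist (g (p (Suc i))) (g (p i)))" using kn p(1) by simp
  also have "\<dots> = (\<Sum>i<Suc k. dist (g (p (Suc i))) (g (p i))) + (\<Sum>i<n - Suc k. dist (g (p (Suc (Suc k + i)))) (g (p (Suc k + i))))"
    by (rule sum_lessThan_add_split)
  also have "(\<Sum>i<n - Suc k. dist (g (p (Suc (Suc k + i)))) (g (p (Suc k + i)))) = 0"
    using after by (intro sum.neutral) auto
  finally have Seq: "S = Sk + dist x (g (p k))" by (simp add: Sk_def gpk1)
  have Sk: "Sk \<in> polygonal_sums g 0 (p k)"
    unfolding polygonal_sums_def Sk_def using p kn
    by (intro CollectI exI[of _ k] exI[of _ p]) auto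
  have rng: "0 \<le> p k" "p k \<le> p (Suc k)" "p (Suc k) \<le> \<sigma>"
    using part_range[OF p(2-4), of k] part_range[OF p(2-4), of "Suc k"] p(4) kn by auto
  have \<sigma>1: "\<sigma> \<le> 1" using \<sigma> by simp
  have cg: "continuous_on {0..1} g" using pg by (simp add: path_def)
  define A where "A = {p k..p (Suc k)} \<inter> g -` {x}"
  have "closed A" unfolding A_def
    proof (rule continuous_closed_preimage)
    show "continuous_on {p k..p (Suc k)} g"
      by (rule continuous_on_subset[OF cg]) (use rng \<sigma>1 in auto)
  qed auto
  moreover have "A \<noteq> {}" using gpk1 rng by (auto simp: A_def)
  moreover have "bdd_below A" by (auto simp: A_def bdd_below_def)
  ultimately have uA: "Inf A \<in> A" by (rule closed_contains_Inf[rotated -1]) 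
  define us where "us = Inf A"
  have us: "p k \<le> us" "us \<le> p (Suc k)" "g us = x" using uA by (auto simp: A_def us_def)
  have uspk: "p k < us" using us gpk by (metis le_less)
  have us01: "us \<in> {0..1}" using us rng \<sigma>1 by auto
  obtain \<eta> where \<eta>: "\<eta> > 0" "\<forall>u\<in>{0..1}. dist u us < \<eta> \<longrightarrow> dist (g u) (g us) < \<delta>"
    using cg us01 \<delta>pos unfolding continuous_on_iff by blast
  define u where "u = max (p k) (us - \<eta>/2)"
  have u: "p k \<le> u" "u < us" "u \<in> {0..1}" "dist u us < \<eta>"
    using uspk \<eta>(1) us01 rng by (auto simp: u_def dist_real_def)
  have gu: "dist (g u) x < \<delta>" using \<eta>(2) u us by auto
  have gux: "g u \<noteq> x"
  proof
    assume "g u = x"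
    then have "u \<in> A" using u us by (auto simp: A_def)
    then have "us \<le> u" unfolding us_def by (rule cInf_lower) (auto simp: A_def bdd_below_def)
    then show False using u by simp
  qed
  have "Sk + dist (g u) (g (p k)) \<le> curve_length g 0 u"
    by (rule L_ge[OF rect ps_concat[OF Sk ps_one]]) (use u in auto)
  moreover have "dist x (g (p k)) \<le> dist (g u) (g (p k)) + dist (g u) x"
    by (metis dist_commute dist_triangle add.commute)
  ultimately have Lu: "S - \<delta> \<le> curve_length g 0 u" using Seq gu by linarith
  have "dist w (g u) \<le> dist w x + dist (g u) x" by (metis dist_commute dist_triangle)
  then have h1: "J * dist w (g u) \<le> J * dist w x + J * dist (g u) x"
    using Jpos by (metis distrib_left mult_left_mono less_imp_le)
  have h2: "J * dist (g u) x < J * \<delta>" using gu Jpos by simp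
  have "J * dist w (g u) < curve_length g 0 u"
    using h1 h2
    using Lu S(2) J\<delta> \<delta>E E_def Epos by linarith
  then have "dist w (g u) < curve_length g 0 u / J" using Jpos by (simp add: field_simps)
  then show ?thesis using u(3) gux by (intro in_carrotI) (auto simp: x_def)
qed



lemma carrot_pt:
  fixes g :: "real \<Rightarrow> 'a::real_normed_vector"
  assumes pg: "path g" and rect: "\<And>a b. 0 \<le> a \<Longrightarrow> a \<le> b \<Longrightarrow> b \<le> 1 \<Longrightarrow> rectifiable_on g a b"
    and J: "J \<ge> 1" and \<sigma>: "\<sigma> \<in> {0..1}"
    and wd: "dist w (g \<sigma>) < curve_length g 0 \<sigma> / J"
  shows "w \<in> carrot g J"
proof (cases "g \<sigma> = g 0")
  case True then show ?thesis using carrot_vertex[OF pg rect J \<sigma> True wd] by blast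
next
  case False then show ?thesis using in_carrotI[OF \<sigma> False wd] by blast
qed

lemma main_construction:
  fixes g :: "real \<Rightarrow> 'a::real_normed_vector"
  assumes pg: "path g" and rect: "\<And>a b. 0 \<le> a \<Longrightarrow> a \<le> b \<Longrightarrow> b \<le> 1 \<Longrightarrow> rectifiable_on g a b"
    and J: "J \<ge> 1" and z: "z \<in> carrot g J"
  shows "\<exists>h. path h \<and> rectifiable_on h 0 1 \<and> pathstart h = z \<and> pathfinish h = g 1 \<and>
    curve_length h 0 1 \<le> curve_length g 0 1 \<and> path_image h \<subseteq> carrot g J \<and> carrot h J \<subseteq> carrot g J"
proof -
  have Jpos: "J > 0" using J by simp
  obtain t where t: "t \<in> {0..1}" "g t \<noteq> g 0" "dist (g t) z < curve_length g 0 t / J"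
    using z unfolding carrot_def by auto
  define lt where "lt = curve_length g 0 t"
  define r where "r = dist z (g t)"
  have Jr: "J * r < lt" using t(3) Jpos by (simp add: r_def lt_def dist_commute field_simps)
  have r0: "r \<ge> 0" by (simp add: r_def)
  have "1 * r \<le> J * r" using J r0 by (intro mult_right_mono) auto
  then have rlt: "r \<le> lt" using Jr by simp
  define h where "h = linepath z (g t) +++ subpath t 1 g"
  define \<phi> where "\<phi> u = 2*t - 1 + 2*(1-t)*u" for u
  have hlin: "h u = (1 - 2*u) *\<^sub>R z + (2*u) *\<^sub>R g t" if "u \<le> 1/2" for u
    using that by (simp add: h_def joinpaths_def linepath_def)
  have hsub: "h u = g (\<phi> u)" if "1/2 \<le> u" for u
  proof (cases "u = 1/2")
    case True then show ?thesis by (simp add: h_def joinpaths_def linepath_def \<phi>_def algebra_simps)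
  next
    case False
    then have "\<not> u \<le> 1/2" using that by simp
    then show ?thesis by (simp add: h_def joinpaths_def subpath_def \<phi>_def algebra_simps)
  qed
  have \<phi>r: "t \<le> \<phi> u \<and> \<phi> u \<le> 1" if "1/2 \<le> u" "u \<le> 1" for u
  proof -
    have "0 \<le> (1-t)*(2*u-1)" using t that by auto
    have "(1-t)*(2*u-1) \<le> (1-t)*1" by (rule mult_left_mono) (use t that in auto)
    then show ?thesis using \<open>0 \<le> (1-t)*(2*u-1)\<close> by (simp add: \<phi>_def algebra_simps)
  qed
  have \<phi>1: "\<phi> 1 = 1" "\<phi> (1/2) = t" by (simp_all add: \<phi>_def algebra_simps)
  have hdist: "dist (h q) (h u) = 2 * r * (q - u)" if "u \<le> q" "q \<le> 1/2" for u q
  proof -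
    have "h q - h u = (2*q - 2*u) *\<^sub>R (g t - z)" using that by (simp add: hlin algebra_simps)
    then show ?thesis using that by (simp add: dist_norm r_def norm_minus_commute)
  qed
  have hdt: "dist (h u) (g t) = (1 - 2*u) * r" if "u \<le> 1/2" for u
  proof -
    have "g t - h u = (1 - 2*u) *\<^sub>R (g t - z)" using that by (simp add: hlin algebra_simps)
    then show ?thesis using that by (simp add: dist_norm r_def norm_minus_commute)
  qed
  have ph: "path h" unfolding h_def using pg t by (intro path_join_imp path_subpath) auto
  have hstart: "pathstart h = z" and hfin: "pathfinish h = g 1"
    by (simp_all add: h_def pathstart_def pathfinish_def joinpaths_def subpath_def linepath_def)
  have h0: "h 0 = z" using hstart by (simp add: pathstart_def)
  have F1: "rectifiable_on h 0 \<tau> \<and> curve_length h 0 \<tau> \<le> 2 * r * \<tau>" if "0 \<le> \<tau>" "\<tau> \<le> 1/2" for \<tau>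
  proof -
    have *: "S \<le> 2 * r * (\<tau> - 0)" if "S \<in> polygonal_sums h 0 \<tau>" for S
      by (rule ps_lipschitz[OF _ that]) (use hdist \<open>\<tau> \<le> 1/2\<close> in auto)
    show ?thesis using rect_le[of 0 \<tau> h, OF \<open>0 \<le> \<tau>\<close> *] L_le[of 0 \<tau> h, OF \<open>0 \<le> \<tau>\<close> *] by simp
  qed
  have F2: "rectifiable_on h (1/2) \<tau> \<and> curve_length h (1/2) \<tau> \<le> curve_length g t (\<phi> \<tau>)"
    if "1/2 \<le> \<tau>" "\<tau> \<le> 1" for \<tau>
  proof -
    have rg: "rectifiable_on g t (\<phi> \<tau>)" using rect \<phi>r[OF that] t by auto
    have *: "S \<le> curve_length g t (\<phi> \<tau>)" if "S \<in> polygonal_sums h (1/2) \<tau>" for S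
    proof -
      have "S \<in> polygonal_sums g ((2*t-1) + (2*(1-t)) * (1/2)) ((2*t-1) + (2*(1-t)) * \<tau>)"
        by (rule ps_reparam[OF _ _ that]) (use t hsub in \<open>auto simp: \<phi>_def\<close>)
      moreover have "(2*t-1) + (2*(1-t)) * (1/2) = t" "(2*t-1) + (2*(1-t)) * \<tau> = \<phi> \<tau>"
        by (simp_all add: \<phi>_def algebra_simps)
      ultimately have "S \<in> polygonal_sums g t (\<phi> \<tau>)" by metis
      then show ?thesis using L_ge[OF rg] by simp
    qed
    show ?thesis using rect_le[of "1/2" \<tau> h, OF \<open>1/2 \<le> \<tau>\<close> *] L_le[of "1/2" \<tau> h, OF \<open>1/2 \<le> \<tau>\<close> *] by simp
  qed
  have F3: "rectifiable_on h 0 \<tau> \<and> curve_length h 0 \<tau> \<le> r + curve_length g t (\<phi> \<tau>)"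
    if "1/2 \<le> \<tau>" "\<tau> \<le> 1" for \<tau>
  proof -
    have a: "rectifiable_on h 0 (1/2)" "curve_length h 0 (1/2) \<le> r" using F1[of "1/2"] by auto
    have b: "rectifiable_on h (1/2) \<tau>" "curve_length h (1/2) \<tau> \<le> curve_length g t (\<phi> \<tau>)"
      using F2[OF that] by auto
    show ?thesis using L_sub[OF a(1) b(1) _ that(1)] a(2) b(2) by force
  qed
  have F4: "lt + curve_length g t \<sigma> \<le> curve_length g 0 \<sigma>" if "t \<le> \<sigma>" "\<sigma> \<le> 1" for \<sigma>
    unfolding lt_def by (rule L_super) (use rect t that in auto)
  have F5: "lt \<le> curve_length g 0 \<sigma>" if "t \<le> \<sigma>" "\<sigma> \<le> 1" for \<sigma>
    using F4[OF that] L_nonneg[OF that(1) rect] that t by force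
  have rh: "rectifiable_on h 0 1" using F3[of 1] by simp
  have Lh: "curve_length h 0 1 \<le> curve_length g 0 1"
    using F3[of 1] F4[of 1] \<phi>1 rlt t by auto
  have img: "path_image h \<subseteq> carrot g J"
  proof
    fix v assume "v \<in> path_image h"
    then obtain u where u: "u \<in> {0..1}" "v = h u" by (auto simp: path_image_def)
    show "v \<in> carrot g J"
    proof (cases "u \<le> 1/2")
      case True
      have "0 \<le> u * r" using u r0 by simp
      then have "dist v (g t) \<le> r" using hdt[OF True] u by (simp add: algebra_simps)
      then have "J * dist v (g t) \<le> J * r"
        using Jpos by (intro mult_left_mono) auto
      then have "J * dist v (g t) < lt" using Jr by linarith
      then have "dist v (g t) < lt / J" using Jpos by (simp add: field_simps)
      then show ?thesis using carrot_pt[OF pg rect J t(1)] by (simp add: lt_def)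
    next
      case False
      then have u2: "1/2 \<le> u" "u \<le> 1" using u by auto
      have "0 < lt" using Jr r0 Jpos by (smt (verit) mult_nonneg_nonneg)
      moreover have "lt \<le> curve_length g 0 (\<phi> u)" using F5 \<phi>r[OF u2] by auto
      ultimately have "dist v (g (\<phi> u)) < curve_length g 0 (\<phi> u) / J"
        using hsub u2 u Jpos by (simp add: field_simps)
      moreover have "\<phi> u \<in> {0..1}" using \<phi>r[OF u2] t by auto
      ultimately show ?thesis using carrot_pt[OF pg rect J] by blast
    qed
  qed
  have car: "carrot h J \<subseteq> carrot g J"
  proof
    fix w assume "w \<in> carrot h J"
    then obtain \<tau> where \<tau>: "\<tau> \<in> {0..1}" "dist w (h \<tau>) < curve_length h 0 \<tau> / J"
      unfolding carrot_def by (auto simp: dist_commute)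
    show "w \<in> carrot g J"
    proof (cases "\<tau> \<le> 1/2")
      case True
      have a: "J * dist w (h \<tau>) < curve_length h 0 \<tau>" using \<tau>(2) Jpos by (simp add: field_simps)
      have b: "curve_length h 0 \<tau> \<le> 2 * r * \<tau>" using F1[OF _ True] \<tau> by auto
      have c: "2 * r * \<tau> \<le> J * (2 * r * \<tau>)" 
      proof -
        have "0 \<le> 2 * r * \<tau>" using r0 \<tau> by simp
        then have "1 * (2 * r * \<tau>) \<le> J * (2 * r * \<tau>)" using J by (intro mult_right_mono) auto
        then show ?thesis by simp
      qed
      have d: "dist w (g t) \<le> dist w (h \<tau>) + (1 - 2*\<tau>) * r"
        using dist_triangle[of w "g t" "h \<tau>"] hdt[OF True] by (simp add: dist_commute)
      have e: "J * dist w (g t) \<le> J * dist w (h \<tau>) + J * ((1 - 2*\<tau>) * r)"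
        using mult_left_mono[OF d, of J] Jpos by (simp add: distrib_left)
      have f: "J * (2 * r * \<tau>) + J * ((1 - 2*\<tau>) * r) = J * r" by (simp add: algebra_simps)
      have "J * dist w (g t) < lt" using a b c e f Jr by linarith
      then have "dist w (g t) < lt / J" using Jpos by (simp add: field_simps)
      then show ?thesis using carrot_pt[OF pg rect J t(1)] by (simp add: lt_def)
    next
      case False
      then have u2: "1/2 \<le> \<tau>" "\<tau> \<le> 1" using \<tau> by auto
      have "curve_length h 0 \<tau> \<le> curve_length g 0 (\<phi> \<tau>)"
        using F3[OF u2] F4 \<phi>r[OF u2] rlt by force
      then have "curve_length h 0 \<tau> / J \<le> curve_length g 0 (\<phi> \<tau>) / J"
        using Jpos by (simp add: divide_right_mono)
      then have "dist w (g (\<phi> \<tau>)) < curve_length g 0 (\<phi> \<tau>) / J"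
        using \<tau>(2) hsub[OF u2(1)] by simp
      moreover have "\<phi> \<tau> \<in> {0..1}" using \<phi>r[OF u2] t by auto
      ultimately show ?thesis using carrot_pt[OF pg rect J] by blast
    qed
  qed
  show ?thesis using ph rh hstart hfin Lh img car by blast
qed



theorem propositionA1:
  fixes \<gamma> :: "real \<Rightarrow> real^2" and J :: real and x y :: "real^2"
  assumes "J \<ge> 1"
    and "locally_rectifiable_path \<gamma>"
    and "pathstart \<gamma> = x" and "pathfinish \<gamma> = y"
  shows "john_carrot_domain (carrot \<gamma> J) J y \<and>
    (\<forall>z \<in> carrot \<gamma> J. \<exists>\<gamma>z s s'.
        rectifiable_path \<gamma>z \<and> pathstart \<gamma>z = z \<and> pathfinish \<gamma>z = y \<and>
        s \<in> {0..1} \<and> s' \<in> {0..1} \<and>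
        (\<forall>u \<in> {0..1}. subpath s' 1 \<gamma>z u = subpath s 1 \<gamma> u) \<and>
        (\<forall>u \<in> {0..1}. curve_length \<gamma>z 0 (s' + u * (1 - s')) \<le> curve_length \<gamma> 0 (s + u * (1 - s))) \<and>
        carrot \<gamma>z J \<subseteq> carrot \<gamma> J)"
proof -
  have pg: "path \<gamma>" using assms(2) by (simp add: locally_rectifiable_path_def)
  have rect: "\<And>a b. 0 \<le> a \<Longrightarrow> a \<le> b \<Longrightarrow> b \<le> 1 \<Longrightarrow> rectifiable_on \<gamma> a b"
    using assms(2) by (simp add: locally_rectifiable_path_def)
  have y1: "\<gamma> 1 = y" using assms(4) by (simp add: pathfinish_def)
  define D where "D = carrot \<gamma> J"
  have MC: "\<exists>h. path h \<and> rectifiable_on h 0 1 \<and> pathstart h = z \<and> pathfinish h = y \<and>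
    curve_length h 0 1 \<le> curve_length \<gamma> 0 1 \<and> path_image h \<subseteq> D \<and> carrot h J \<subseteq> D"
    if "z \<in> D" for z
    using main_construction[OF pg rect assms(1) that[unfolded D_def]] y1 D_def by auto
  have opn: "open D" unfolding D_def carrot_def by (auto intro!: open_Union)
  define F where "F = {path_image \<beta> | \<beta>. path \<beta> \<and> pathfinish \<beta> = y \<and> path_image \<beta> \<subseteq> D}"
  have DF: "D = \<Union>F"
  proof
    show "D \<subseteq> \<Union>F"
    proof
      fix p assume "p \<in> D"
      then obtain h where "path h" "pathstart h = p" "pathfinish h = y" "path_image h \<subseteq> D"
        using MC by blast
      then show "p \<in> \<Union>F" unfolding F_def using pathstart_in_path_image[of h] by blast
    qed
    show "\<Union>F \<subseteq> D" unfolding F_def by blast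
  qed
  have con: "connected D"
  proof (cases "F = {}")
    case True then show ?thesis using DF by simp
  next
    case False
    have "y \<in> \<Inter>F" unfolding F_def using pathfinish_in_path_image by blast
    then have "\<Inter>F \<noteq> {}" by blast
    moreover have "\<And>s. s \<in> F \<Longrightarrow> connected s" unfolding F_def using connected_path_image by blast
    ultimately show ?thesis using DF connected_Union by metis
  qed
  have john: "john_carrot_domain D J y"
    unfolding john_carrot_domain_def using opn con MC by blast
  have part2: "\<exists>\<gamma>z s s'.
        rectifiable_path \<gamma>z \<and> pathstart \<gamma>z = z \<and> pathfinish \<gamma>z = y \<and>
        s \<in> {0..1} \<and> s' \<in> {0..1} \<and>
        (\<forall>u \<in> {0..1}. subpath s' 1 \<gamma>z u = subpath s 1 \<gamma> u) \<and>
        (\<forall>u \<in> {0..1}. curve_length \<gamma>z 0 (s' + u * (1 - s')) \<le> curve_length \<gamma> 0 (s + u * (1 - s))) \<and>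
        carrot \<gamma>z J \<subseteq> carrot \<gamma> J" if zD: "z \<in> D" for z
  proof -
    obtain h where h: "path h" "rectifiable_on h 0 1" "pathstart h = z" "pathfinish h = y"
      "curve_length h 0 1 \<le> curve_length \<gamma> 0 1" "carrot h J \<subseteq> D"
      using MC[OF zD] by blast
    have "h 1 = y" using h(4) by (simp add: pathfinish_def)
    then have "\<forall>u \<in> {0..1}. subpath 1 1 h u = subpath 1 1 \<gamma> u" using y1 by (simp add: subpath_def)
    moreover have "\<forall>u \<in> {0..1}. curve_length h 0 (1 + u * (1 - 1)) \<le> curve_length \<gamma> 0 (1 + u * (1 - 1))"
      using h(5) by simp
    ultimately show ?thesis using h D_def unfolding rectifiable_path_def
      by (intro exI[of _ h] exI[of _ "1::real"]) auto
  qed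
  show ?thesis using john part2 D_def by blast
qed

end
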